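(* Let $\mathcal{S}$ be a simple-minded system of $A_n^{dn}$-$\underline{\mathrm{mod}}$ and let $\sigma$ be the associated permutation of $\underline{n}$. Let $i\in\underline{n}$ and suppose the $\sigma$-orbit of $i$ has $s_i\ge3$ elements. Then for each $2\le t\le s_i-1$, the vertex $\sigma^t(i)$ lies on the arc from $i$ to $\sigma^{t-1}(i)$, i.e. $\sigma^t(i)\in\{i,\overline{i+1},\dots,\sigma^{t-1}(i)\}$.
   Context: $A_n^{dn}=kQ/I$ ($k$ algebraically closed), $Q$ the cyclic quiver with vertices $1,\dots,n$ and arrows $i\to i+1$, $n\to 1$, $I$ generated by all paths of length $dn+1$. $\underline{n}=\{1,\dots,n\}$; for $a\in\mathbb{Z}$, $\bar a\in\underline{n}$ with $a\equiv\bar a\pmod n$; the arc from $a$ to $b$ is the vertex set $\{a,\overline{a+1},\dots,b\}$ of the shortest path from $a$ to $b$ in $Q$ ($\{a\}$ if $a=b$). $\underline{\mathrm{Hom}}$ is Hom modulo maps factoring through projectives. A simple-minded system (sms) is a family $\mathcal{S}$ of indecomposable non-projective modules with $\underline{\mathrm{Hom}}(S,T)=0$ for distinct $S,T\in\mathcal{S}$, $\underline{\mathrm{Hom}}(S,S)\cong k$, and such that each indecomposable non-projective $X$ has $\underline{\mathrm{Hom}}(X,S)\neq 0$ for some $S\in\mathcal{S}$. For an sms, each simple module is the top of exactly one object of $\mathcal{S}$ and the socle of exactly one object of $\mathcal{S}$; the associated permutation $\sigma$ is defined by $\sigma(a)=b$ if some object of $\mathcal{S}$ has top $S_a$ and socle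 $S_b$. *)

theory Defs
  imports Main "HOL-Number_Theory.Cong"
begin

text \<open>Combinatorial model of the stable module category of the self-injective
Nakayama algebra A_n^{dn} = kQ/I (Q cyclic with n vertices, I = all paths of
length dn+1).  Every indecomposable module is uniserial and is determined up to
isomorphism by its top S_a and its length l; we write it as the pair (a,l),
1 \<le> a \<le> n, 1 \<le> l \<le> dn+1.  The projective-injective ones are exactly those of
length dn+1, so the indecomposable non-projective modules are the pairs with
1 \<le> l \<le> dn.\<close>

type_synonym umod = "nat \<times> nat"

definition vbar :: "nat \<Rightarrow> int \<Rightarrow> nat" where
  "vbar n x = nat ((x - 1) mod int n) + 1"

definition ind_nonproj :: "nat \<Rightarrow> nat \<Rightarrow> umod \<Rightarrow> bool" where
  "ind_nonproj n d X \<longleftrightarrow> fst X \<in> {1..n} \<and> 1 \<le> snd X \<and> snd X \<le> d * n"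

definition top_of :: "umod \<Rightarrow> nat" where
  "top_of X = fst X"

text \<open>Socle of the uniserial module with top a and length l is S_{a+l-1}.\<close>
definition soc_of :: "nat \<Rightarrow> umod \<Rightarrow> nat" where
  "soc_of n X = vbar n (int (fst X) + int (snd X) - 1)"

text \<open>A basis of Hom(M(a,l), M(b,m)) is given
by the maps f_j with image of length j, where 1 \<le> j \<le> min l m and
a \<equiv> b + m - j (mod n); f_j factors through a projective iff
j \<le> l + m - (dn+1).\<close>
definition stable_hom_dim :: "nat \<Rightarrow> nat \<Rightarrow> umod \<Rightarrow> umod \<Rightarrow> nat" where
  "stable_hom_dim n d X Y =
     card {j::nat. max 1 (snd X + snd Y - d * n) \<le> j \<and> j \<le> min (snd X) (snd Y) \<and>
                   [int j = int (fst Y) + int (snd Y) - int (fst X)] (mod int n)}"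

definition is_sms :: "nat \<Rightarrow> nat \<Rightarrow> umod set \<Rightarrow> bool" where
  "is_sms n d S \<longleftrightarrow>
     (\<forall>X\<in>S. ind_nonproj n d X) \<and>
     (\<forall>X\<in>S. \<forall>Y\<in>S. X \<noteq> Y \<longrightarrow> stable_hom_dim n d X Y = 0) \<and>
     (\<forall>X\<in>S. stable_hom_dim n d X X = 1) \<and>
     (\<forall>X. ind_nonproj n d X \<longrightarrow> (\<exists>Y\<in>S. stable_hom_dim n d X Y \<noteq> 0))"

definition sms_perm :: "nat \<Rightarrow> umod set \<Rightarrow> nat \<Rightarrow> nat" where
  "sms_perm n S a = (THE b. \<exists>X\<in>S. top_of X = a \<and> soc_of n X = b)"

definition orbit_size :: "(nat \<Rightarrow> nat) \<Rightarrow> nat \<Rightarrow> nat" where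
  "orbit_size \<sigma> i = card {(\<sigma> ^^ k) i | k. True}"

definition arc :: "nat \<Rightarrow> nat \<Rightarrow> nat \<Rightarrow> nat set" where
  "arc n a b = {vbar n (int a + int k) | k. k \<le> nat ((int b - int a) mod int n)}"

end

theory Submission
  imports Defs
begin

lemma core:
  fixes n d a c l m s0 e0 :: int
  assumes n1: "n \<ge> 1" and l1: "1 \<le> l" and ld: "l \<le> n*d" and m1: "1 \<le> m" and md: "m \<le> n*d"
    and s0: "s0 mod n = (a+l-1) mod n" and e0: "e0 mod n = (c+m-1) mod n"
    and k0: "0 < (c - s0) mod n" and kg: "(c-s0) mod n < (a - s0) mod n"
    and ne: "\<not> (0 < (e0 - s0) mod n \<and> (e0-s0) mod n < (a-s0) mod n)"
  shows "\<exists>j. max 1 (l+m-n*d) \<le> j \<and> j \<le> min l m \<and> n dvd (j - (c+m-a))"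
proof -
  define g where "g = (a-s0) mod n"
  define k where "k = (c-s0) mod n"
  define e' where "e' = (e0-s0) mod n"
  define e where "e = (if e' = 0 then n else e')"
  obtain Ga where Ga: "a - s0 = n*Ga + g" unfolding g_def by (metis mult_div_mod_eq)
  obtain Gc where Gc: "c - s0 = n*Gc + k" unfolding k_def by (metis mult_div_mod_eq)
  obtain Ge where Ge: "e0 - s0 = n*Ge + e'" unfolding e'_def by (metis mult_div_mod_eq)
  obtain S1 where S1: "s0 = a+l-1 + n*S1"
    using s0 by (metis mod_eq_dvd_iff dvdE eq_diff_eq add.commute)
  obtain E1 where E1: "e0 = c+m-1 + n*E1"
    using e0 by (metis mod_eq_dvd_iff dvdE eq_diff_eq add.commute)
  have gn: "g < n" "0 \<le> e'" "e' < n" using n1 unfolding g_def e'_def by simp_all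
  have kk: "0 < k" "k < g" using k0 kg unfolding g_def k_def by simp_all
  have ne': "\<not> (0 < e' \<and> e' < g)" using ne unfolding e'_def g_def .
  have eg: "g \<le> e" "e \<le> n" using ne' gn unfolding e_def by auto
  obtain Ge' where Ge': "e0 - s0 = n*Ge' + e"
  proof (cases "e' = 0")
    case True
    then show ?thesis using Ge that[of "Ge - 1"] by (simp add: e_def algebra_simps)
  next
    case False
    then show ?thesis using Ge that[of "Ge"] by (simp add: e_def algebra_simps)
  qed
  define ql where "ql = -1 - S1 - Ga"
  have lq: "l = n - g + 1 + n*ql" using Ga S1 unfolding ql_def by (simp add: algebra_simps)
  define qm where "qm = Ge' - E1 - Gc"
  have mq: "m = e - k + 1 + n*qm" using Ge' E1 Gc unfolding qm_def by (simp add: algebra_simps)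
  have A1: "n*ql > n*(-1)" using lq l1 gn kk by linarith
  have ql0: "ql \<ge> 0"
  proof (rule ccontr)
    assume "\<not> ?thesis" hence "ql \<le> -1" by simp
    hence "n*ql \<le> n*(-1)" using n1 by (intro mult_left_mono) auto
    with A1 show False by simp
  qed
  have A2: "n*qm > n*(-1)" using mq m1 eg kk by linarith
  have qm0: "qm \<ge> 0"
  proof (rule ccontr)
    assume "\<not> ?thesis" hence "qm \<le> -1" by simp
    hence "n*qm \<le> n*(-1)" using n1 by (intro mult_left_mono) auto
    with A2 show False by simp
  qed
  have A3: "n*ql < n*d" using lq ld gn kk mult.commute[of d n] by linarith
  have "ql + 1 \<le> d"
  proof (rule ccontr)
    assume "\<not> ?thesis" hence "d \<le> ql" by simp
    hence "n*d \<le> n*ql" using n1 by (intro mult_left_mono) auto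
    with A3 show False by simp
  qed
  hence "n*(ql+1) \<le> n*d" using n1 by (intro mult_left_mono) auto
  hence qld: "n*ql + n \<le> n*d" by (simp add: algebra_simps)
  have A4: "n*qm < n*d" using mq md eg kk mult.commute[of d n] by linarith
  have "qm + 1 \<le> d"
  proof (rule ccontr)
    assume "\<not> ?thesis" hence "d \<le> qm" by simp
    hence "n*d \<le> n*qm" using n1 by (intro mult_left_mono) auto
    with A4 show False by simp
  qed
  hence "n*(qm+1) \<le> n*d" using n1 by (intro mult_left_mono) auto
  hence qmd: "n*qm + n \<le> n*d" by (simp add: algebra_simps)
  have P: "n*ql \<ge> 0" "n*qm \<ge> 0" using ql0 qm0 n1 by simp_all
  have dv: "n dvd (k - g - c + a)"
  proof -
    have "k - g - c + a = n*(Ga - Gc)" using Ga Gc by (simp add: algebra_simps)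
    thus ?thesis by simp
  qed
  show ?thesis
  proof (cases "l \<le> m")
    case True
    define j where "j = l - (n - e)"
    have eq: "j - (c+m-a) = (k - g - c + a) + n*(ql - qm)"
      unfolding j_def using lq mq eg by (simp add: algebra_simps)
    have "n dvd (j - (c+m-a))" unfolding eq by (intro dvd_add dv dvd_triv_left)
    moreover have "1 \<le> j" "l+m-n*d \<le> j" "j \<le> l" "j \<le> m"
      unfolding j_def using True lq mq eg kk gn qmd ql0 qm0 P n1 ld md by linarith+
    hence "max 1 (l+m-n*d) \<le> j" "j \<le> min l m" by simp_all
    ultimately show ?thesis by blast
  next
    case False
    define j where "j = m - (g - k)"
    have eq: "j - (c+m-a) = k - g - c + a"
      unfolding j_def by (simp add: algebra_simps)
    have "n dvd (j - (c+m-a))" unfolding eq by (rule dv)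
    moreover have "1 \<le> j" "l+m-n*d \<le> j" "j \<le> l" "j \<le> m"
      unfolding j_def using False lq mq eg kk gn qld ql0 qm0 P n1 ld md by linarith+
    hence "max 1 (l+m-n*d) \<le> j" "j \<le> min l m" by simp_all
    ultimately show ?thesis by blast
  qed
qed


lemma vbar_range: "n \<ge> 1 \<Longrightarrow> vbar n x \<in> {1..n}"
  unfolding vbar_def
proof -
  assume n: "n \<ge> 1"
  have "0 \<le> (x - 1) mod int n" "(x - 1) mod int n < int n" using n by simp_all
  thus "nat ((x - 1) mod int n) + 1 \<in> {1..n}" by auto
qed

lemma vbar_int: "n \<ge> 1 \<Longrightarrow> int (vbar n x) = (x - 1) mod int n + 1"
  unfolding vbar_def by simp

lemma vbar_mod: "n \<ge> 1 \<Longrightarrow> int (vbar n x) mod int n = x mod int n"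
proof -
  assume n: "n \<ge> 1"
  have "int (vbar n x) mod int n = ((x - 1) mod int n + 1) mod int n" using vbar_int[OF n] by simp
  also have "\<dots> = (x - 1 + 1) mod int n" by (simp add: mod_add_left_eq)
  finally show ?thesis by simp
qed

lemma mod_id_range: "n \<ge> 1 \<Longrightarrow> a \<in> {1..n} \<Longrightarrow> (int a - 1) mod int n = int a - 1"
  by (auto intro: mod_pos_pos_trivial)

lemma vbar_id: "n \<ge> 1 \<Longrightarrow> a \<in> {1..n} \<Longrightarrow> vbar n (int a) = a"
  unfolding vbar_def using mod_id_range[of n a] by auto

lemma eq_of_mod:
  assumes n: "n \<ge> 1" and a: "a \<in> {1..n}" and b: "b \<in> {1..n}"
    and e: "int a mod int n = int b mod int n"
  shows "a = b"
proof -
  have "(int a - 1) mod int n = (int b - 1) mod int n" using e by (metis mod_diff_left_eq)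
  thus ?thesis using mod_id_range[OF n a] mod_id_range[OF n b] by simp
qed

lemma int_mod_repr:
  fixes x r n K :: int
  assumes "0 \<le> r" "r < n" "x = r + n*K"
  shows "x mod n = r"
  using assms by simp

lemma hom_pos:
  assumes "max 1 (snd X + snd Y - d*n) \<le> j" "j \<le> min (snd X) (snd Y)"
    "[int j = int (fst Y) + int (snd Y) - int (fst X)] (mod int n)"
  shows "stable_hom_dim n d X Y \<noteq> 0"
proof -
  let ?A = "{j::nat. max 1 (snd X + snd Y - d * n) \<le> j \<and> j \<le> min (snd X) (snd Y) \<and>
                   [int j = int (fst Y) + int (snd Y) - int (fst X)] (mod int n)}"
  have "finite ?A" by (rule finite_subset[of _ "{..min (snd X) (snd Y)}"]) auto
  moreover have "j \<in> ?A" using assms by simp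
  ultimately have "card ?A \<noteq> 0" by auto
  thus ?thesis unfolding stable_hom_dim_def .
qed

lemma hom_zero:
  assumes "stable_hom_dim n d X Y = 0"
  shows "\<not> (max 1 (snd X + snd Y - d*n) \<le> j \<and> j \<le> min (snd X) (snd Y) \<and>
    [int j = int (fst Y) + int (snd Y) - int (fst X)] (mod int n))"
  using hom_pos[of X Y d n j] assms by blast

lemma hom_witness:
  assumes "stable_hom_dim n d X Y \<noteq> 0"
  shows "\<exists>j. max 1 (snd X + snd Y - d*n) \<le> j \<and> j \<le> min (snd X) (snd Y) \<and>
    [int j = int (fst Y) + int (snd Y) - int (fst X)] (mod int n)"
proof (rule ccontr)
  assume "\<not> ?thesis"
  hence "{j::nat. max 1 (snd X + snd Y - d * n) \<le> j \<and> j \<le> min (snd X) (snd Y) \<and>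
                   [int j = int (fst Y) + int (snd Y) - int (fst X)] (mod int n)} = {}" by blast
  thus False using assms unfolding stable_hom_dim_def by simp
qed

lemma bridge:
  assumes n1: "n \<ge> 1" and X: "ind_nonproj n d X" and Y: "ind_nonproj n d Y"
    and h: "stable_hom_dim n d X Y = 0"
    and k0: "0 < (int (fst Y) - int (soc_of n X)) mod int n"
    and kg: "(int (fst Y) - int (soc_of n X)) mod int n < (int (fst X) - int (soc_of n X)) mod int n"
  shows "0 < (int (soc_of n Y) - int (soc_of n X)) mod int n \<and>
    (int (soc_of n Y) - int (soc_of n X)) mod int n < (int (fst X) - int (soc_of n X)) mod int n"
proof (rule ccontr)
  assume ne: "\<not> ?thesis"
  obtain a l where Xe: "X = (a,l)" by (cases X)
  obtain c m where Ye: "Y = (c,m)" by (cases Y)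
  have l: "1 \<le> l" "l \<le> d*n" and m: "1 \<le> m" "m \<le> d*n"
    using X Y unfolding Xe Ye ind_nonproj_def by auto
  have s0: "int (soc_of n X) mod int n = (int a + int l - 1) mod int n"
    unfolding soc_of_def Xe using vbar_mod[OF n1] by simp
  have e0: "int (soc_of n Y) mod int n = (int c + int m - 1) mod int n"
    unfolding soc_of_def Ye using vbar_mod[OF n1] by simp
  have l': "1 \<le> int l" "int l \<le> int n * int d" and m': "1 \<le> int m" "int m \<le> int n * int d"
    using l m by (simp_all add: mult.commute flip: of_nat_mult)
  obtain j where j: "max 1 (int l + int m - int n * int d) \<le> j" "j \<le> min (int l) (int m)"
      "int n dvd (j - (int c + int m - int a))"
    using core[of "int n" "int l" "int d" "int m" "int (soc_of n X)" "int a" "int (soc_of n Y)" "int c"]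
      n1 l' m' s0 e0 k0 kg ne unfolding Xe Ye by auto
  have j1: "j \<ge> 1" using j(1) by simp
  have "max 1 (snd X + snd Y - d*n) \<le> nat j"
  proof -
    have "int (l + m - d*n) \<le> max 0 (int l + int m - int n * int d)"
      by (cases "d*n \<le> l+m") (auto simp: of_nat_diff mult.commute)
    moreover have "int l + int m - int n * int d \<le> j" using j(1) by simp
    ultimately have "int (l + m - d*n) \<le> j" using j1 by simp
    hence "l + m - d*n \<le> nat j" by linarith
    thus ?thesis using j1 unfolding Xe Ye by simp
  qed
  moreover have "nat j \<le> min (snd X) (snd Y)" using j(2) j1 unfolding Xe Ye by auto
  moreover have "[int (nat j) = int (fst Y) + int (snd Y) - int (fst X)] (mod int n)"
    using j(3) j1 unfolding Xe Ye by (simp add: cong_iff_dvd_diff)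
  ultimately show False using hom_zero[OF h] by blast
qed

lemma orbit_return:
  assumes "(f ^^ k) i = i" "k \<ge> 1"
  shows "orbit_size f i \<le> k"
proof -
  have "{(f ^^ m) i | m. True} \<subseteq> (\<lambda>m. (f ^^ m) i) ` {..<k}"
  proof
    fix x assume "x \<in> {(f ^^ m) i | m. True}"
    then obtain m where x: "x = (f ^^ m) i" by blast
    have "x = (f ^^ (m mod k)) i" using x funpow_mod_eq[where f=f and n=k and x=i and m=m] assms(1) by simp
    moreover have "m mod k < k" using assms(2) by simp
    ultimately show "x \<in> (\<lambda>m. (f ^^ m) i) ` {..<k}" by blast
  qed
  hence "card {(f ^^ m) i | m. True} \<le> card ((\<lambda>m. (f ^^ m) i) ` {..<k})"
    by (intro card_mono) auto
  also have "\<dots> \<le> k" using card_image_le[of "{..<k}" "\<lambda>m. (f ^^ m) i"] by simp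
  finally show ?thesis unfolding orbit_size_def .
qed

lemma arc_mem:
  assumes n: "n \<ge> 1" and y: "y \<in> {1..n}"
    and le: "(int y - int a) mod int n \<le> (int b - int a) mod int n"
  shows "y \<in> arc n a b"
proof -
  define k where "k = nat ((int y - int a) mod int n)"
  have k0: "int k = (int y - int a) mod int n" unfolding k_def using n by simp
  have "k \<le> nat ((int b - int a) mod int n)" unfolding k_def using le by simp
  moreover have "vbar n (int a + int k) = y"
  proof -
    have "(int a + int k - 1) mod int n = ((int a - 1) + int k) mod int n" by (simp add: algebra_simps)
    also have "\<dots> = ((int a - 1) + (int y - int a)) mod int n" unfolding k0 by (rule mod_add_right_eq)
    also have "\<dots> = (int a + (int y - int a) - 1) mod int n" by (simp add: algebra_simps)
    also have "\<dots> = int y - 1" using mod_id_range[OF n y] by simp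
    moreover have "nat (int y - 1) = y - 1" by (simp add: nat_diff_distrib')
    ultimately show ?thesis unfolding vbar_def using y by simp
  qed
  ultimately show ?thesis unfolding arc_def by blast
qed

context
  fixes n d :: nat and S :: "umod set"
  assumes n1: "n \<ge> 1" and d1: "d \<ge> 1" and sms: "is_sms n d S"
begin

lemma S_ind: "X \<in> S \<Longrightarrow> ind_nonproj n d X"
  using sms unfolding is_sms_def by blast

lemma S_orth: "X \<in> S \<Longrightarrow> Y \<in> S \<Longrightarrow> X \<noteq> Y \<Longrightarrow> stable_hom_dim n d X Y = 0"
  using sms unfolding is_sms_def by blast

lemma S_gen: "ind_nonproj n d X \<Longrightarrow> \<exists>Y\<in>S. stable_hom_dim n d X Y \<noteq> 0"
  using sms unfolding is_sms_def by blast

lemma soc_surj: "a \<in> {1..n} \<Longrightarrow> \<exists>Y\<in>S. soc_of n Y = a"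
proof -
  assume a: "a \<in> {1..n}"
  have "ind_nonproj n d (a,1)" using a n1 d1 unfolding ind_nonproj_def by simp
  then obtain Y where Y: "Y \<in> S" "stable_hom_dim n d (a,1) Y \<noteq> 0" using S_gen by blast
  obtain j where j: "max 1 (1 + snd Y - d*n) \<le> j" "j \<le> min 1 (snd Y)"
    "[int j = int (fst Y) + int (snd Y) - int a] (mod int n)"
    using hom_witness[OF Y(2)] by auto
  have "j = 1" using j(1,2) by simp
  hence dv: "int n dvd (1 - (int (fst Y) + int (snd Y) - int a))"
    using j(3) by (simp add: cong_iff_dvd_diff)
  have eq: "(int (fst Y) + int (snd Y) - 1) - int a = - (1 - (int (fst Y) + int (snd Y) - int a))" by simp
  have "int n dvd ((int (fst Y) + int (snd Y) - 1) - int a)" unfolding eq dvd_minus_iff by (rule dv)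
  hence "(int (fst Y) + int (snd Y) - 1) mod int n = int a mod int n"
    by (simp add: mod_eq_dvd_iff)
  hence "int (soc_of n Y) mod int n = int a mod int n"
    unfolding soc_of_def using vbar_mod[OF n1] by simp
  hence "soc_of n Y = a" using eq_of_mod[OF n1 _ a] vbar_range[OF n1] unfolding soc_of_def by blast
  thus ?thesis using Y(1) by blast
qed

lemma soc_inj_aux:
  assumes X: "X \<in> S" and Y: "Y \<in> S" and s: "soc_of n X = soc_of n Y" and le: "snd X \<le> snd Y"
  shows "X = Y"
proof (rule ccontr)
  assume ne: "X \<noteq> Y"
  have h: "stable_hom_dim n d X Y = 0" using S_orth[OF X Y ne] .
  have iY: "snd Y \<le> d*n" "1 \<le> snd X" using S_ind[OF X] S_ind[OF Y] unfolding ind_nonproj_def by auto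
  have "(int (fst X) + int (snd X) - 1) mod int n = (int (fst Y) + int (snd Y) - 1) mod int n"
  proof -
    have "int (vbar n (int (fst X) + int (snd X) - 1)) mod int n = int (vbar n (int (fst Y) + int (snd Y) - 1)) mod int n"
      using s unfolding soc_of_def by simp
    thus ?thesis unfolding vbar_mod[OF n1] .
  qed
  hence dv: "int n dvd ((int (fst X) + int (snd X) - 1) - (int (fst Y) + int (snd Y) - 1))"
    by (simp only: mod_eq_dvd_iff)
  have eq: "int (snd X) - (int (fst Y) + int (snd Y) - int (fst X)) =
    (int (fst X) + int (snd X) - 1) - (int (fst Y) + int (snd Y) - 1)" by simp
  have "[int (snd X) = int (fst Y) + int (snd Y) - int (fst X)] (mod int n)"
    unfolding cong_iff_dvd_diff eq by (rule dv)
  moreover have "max 1 (snd X + snd Y - d*n) \<le> snd X" "snd X \<le> min (snd X) (snd Y)"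
    using iY le by auto
  ultimately show False using hom_zero[OF h] by blast
qed

lemma soc_inj: "inj_on (soc_of n) S"
  unfolding inj_on_def
proof (intro ballI impI)
  fix X Y assume X: "X \<in> S" and Y: "Y \<in> S" and s: "soc_of n X = soc_of n Y"
  show "X = Y"
  proof (cases "snd X \<le> snd Y")
    case True thus ?thesis using soc_inj_aux[OF X Y s] by blast
  next
    case False thus ?thesis using soc_inj_aux[OF Y X s[symmetric]] by simp
  qed
qed

lemma top_inj_aux:
  assumes X: "X \<in> S" and Y: "Y \<in> S" and s: "fst X = fst Y" and le: "snd X \<le> snd Y"
  shows "X = Y"
proof (rule ccontr)
  assume ne: "X \<noteq> Y"
  have h: "stable_hom_dim n d Y X = 0" by (rule S_orth[OF Y X]) (use ne in auto)
  have iY: "snd Y \<le> d*n" "1 \<le> snd X" using S_ind[OF X] S_ind[OF Y] unfolding ind_nonproj_def by auto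
  have "[int (snd X) = int (fst X) + int (snd X) - int (fst Y)] (mod int n)"
    using s by simp
  moreover have "max 1 (snd Y + snd X - d*n) \<le> snd X" "snd X \<le> min (snd Y) (snd X)"
    using iY le by auto
  ultimately show False using hom_zero[OF h] by blast
qed

lemma top_inj: "inj_on fst S"
  unfolding inj_on_def
proof (intro ballI impI)
  fix X Y :: umod assume X: "X \<in> S" and Y: "Y \<in> S" and s: "fst X = fst Y"
  show "X = Y"
  proof (cases "snd X \<le> snd Y")
    case True thus ?thesis using top_inj_aux[OF X Y s] by blast
  next
    case False thus ?thesis using top_inj_aux[OF Y X s[symmetric]] by simp
  qed
qed

lemma finS: "finite S"
proof (rule finite_subset)
  show "S \<subseteq> {1..n} \<times> {1..d*n}" using S_ind unfolding ind_nonproj_def by force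
qed simp

lemma top_surj: "fst ` S = {1..n}"
proof -
  have "soc_of n ` S = {1..n}"
  proof
    show "soc_of n ` S \<subseteq> {1..n}" unfolding soc_of_def using vbar_range[OF n1] by blast
    show "{1..n} \<subseteq> soc_of n ` S" using soc_surj by blast
  qed
  hence "card S = n" using card_image[OF soc_inj] by simp
  hence c: "card (fst ` S) = n" using card_image[OF top_inj] by simp
  have "fst ` S \<subseteq> {1..n}" using S_ind unfolding ind_nonproj_def by blast
  thus ?thesis using c by (intro card_subset_eq) auto
qed

lemma perm_eq: "X \<in> S \<Longrightarrow> sms_perm n S (fst X) = soc_of n X"
  unfolding sms_perm_def
proof (rule the_equality)
  assume X: "X \<in> S"
  show "\<exists>Xa\<in>S. top_of Xa = fst X \<and> soc_of n Xa = soc_of n X" using X unfolding top_of_def by blast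
  fix b assume "\<exists>Xa\<in>S. top_of Xa = fst X \<and> soc_of n Xa = b"
  then obtain Xa where "Xa \<in> S" "fst Xa = fst X" "soc_of n Xa = b" unfolding top_of_def by blast
  hence "Xa = X" using inj_onD[OF top_inj] X by blast
  thus "b = soc_of n X" using \<open>soc_of n Xa = b\<close> by simp
qed

lemma obj: "a \<in> {1..n} \<Longrightarrow> \<exists>X\<in>S. fst X = a"
proof -
  assume "a \<in> {1..n}"
  hence "a \<in> fst ` S" using top_surj by simp
  thus ?thesis by force
qed

lemma perm_range: "a \<in> {1..n} \<Longrightarrow> sms_perm n S a \<in> {1..n}"
proof -
  assume "a \<in> {1..n}"
  then obtain X where X: "X \<in> S" "fst X = a" using obj by blast
  have "sms_perm n S a = soc_of n X" using perm_eq[OF X(1)] X(2) by simp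
  thus ?thesis unfolding soc_of_def using vbar_range[OF n1] by simp
qed

lemma funpow_range: "a \<in> {1..n} \<Longrightarrow> (sms_perm n S ^^ k) a \<in> {1..n}"
proof (induction k)
  case 0 thus ?case by simp
next
  case (Suc k)
  hence "(sms_perm n S ^^ k) a \<in> {1..n}" by blast
  hence "sms_perm n S ((sms_perm n S ^^ k) a) \<in> {1..n}" by (rule perm_range)
  thus ?case by simp
qed

abbreviation inG :: "nat \<Rightarrow> nat \<Rightarrow> bool" where
  "inG a x \<equiv> x \<in> {1..n} \<and> 0 < (int x - int (sms_perm n S a)) mod int n \<and>
     (int x - int (sms_perm n S a)) mod int n < (int a - int (sms_perm n S a)) mod int n"

lemma inv_step:
  assumes a: "a \<in> {1..n}" and c: "inG a c"
  shows "inG a (sms_perm n S c)"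
proof -
  obtain X where X: "X \<in> S" "fst X = a" using obj[OF a] by blast
  obtain Y where Y: "Y \<in> S" "fst Y = c" using obj c by blast
  have "c \<noteq> a" using c by auto
  hence "X \<noteq> Y" using X Y by auto
  hence h: "stable_hom_dim n d X Y = 0" using S_orth X Y by blast
  have pX: "sms_perm n S a = soc_of n X" using perm_eq X by blast
  have pY: "sms_perm n S c = soc_of n Y" using perm_eq Y by blast
  have "0 < (int (soc_of n Y) - int (soc_of n X)) mod int n \<and>
    (int (soc_of n Y) - int (soc_of n X)) mod int n < (int (fst X) - int (soc_of n X)) mod int n"
    using bridge[OF n1 S_ind[OF X(1)] S_ind[OF Y(1)] h] c X(2) Y(2) pX by simp
  moreover have "sms_perm n S c \<in> {1..n}" using perm_range c by blast
  ultimately show ?thesis using pX pY X(2) by simp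
qed

lemma inv_iter:
  assumes a: "a \<in> {1..n}" and c: "inG a c"
  shows "inG a ((sms_perm n S ^^ k) c)"
  by (induction k) (use c inv_step[OF a] in auto)

end

theorem corollary4p4:
  fixes n d i t :: nat and S :: "umod set"
  assumes "n \<ge> 1" and "d \<ge> 1"
    and "is_sms n d S"
    and "i \<in> {1..n}"
    and "orbit_size (sms_perm n S) i \<ge> 3"
    and "2 \<le> t" and "t \<le> orbit_size (sms_perm n S) i - 1"
  shows "(sms_perm n S ^^ t) i \<in> arc n i ((sms_perm n S ^^ (t - 1)) i)"
proof -
  note n1 = assms(1) and ctx = assms(1,2,3)
  let ?s = "sms_perm n S"
  define x where "x = (?s ^^ (t - 1)) i"
  define y where "y = (?s ^^ t) i"
  obtain t' where t': "t = Suc t'" using assms(6) by (cases t) auto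
  have yx: "y = ?s x" unfolding x_def y_def t' by simp
  have xr: "x \<in> {1..n}" unfolding x_def using funpow_range[OF ctx assms(4)] .
  have yr: "y \<in> {1..n}" unfolding y_def using funpow_range[OF ctx assms(4)] .
  have xi: "x \<noteq> i"
  proof
    assume "x = i"
    hence "orbit_size ?s i \<le> t - 1" using orbit_return[where f="?s" and k="t-1" and i=i] assms(6) unfolding x_def by simp
    thus False using assms(7) assms(5) by simp
  qed
  have yi: "y \<noteq> i"
  proof
    assume "y = i"
    hence "orbit_size ?s i \<le> t" using orbit_return[where f="?s" and k=t and i=i] assms(6) unfolding y_def by simp
    thus False using assms(7) assms(5) by simp
  qed
  show ?thesis
  proof (rule ccontr)
    assume nm: "\<not> ?thesis"
    define p where "p = (int x - int i) mod int n"
    define q where "q = (int y - int i) mod int n"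
    have pq: "p < q" using nm arc_mem[OF n1 yr, of i x] unfolding p_def q_def x_def y_def by force
    have p0: "0 < p"
    proof -
      have "p \<noteq> 0"
      proof
        assume "p = 0"
        hence "int x mod int n = int i mod int n" unfolding p_def by (simp add: mod_eq_dvd_iff dvd_eq_mod_eq_0)
        thus False using eq_of_mod[OF n1 xr assms(4)] xi by simp
      qed
      moreover have "0 \<le> p" unfolding p_def using n1 by simp
      ultimately show ?thesis by simp
    qed
    have qn: "q < int n" unfolding q_def using n1 by simp
    obtain P where P: "int x - int i = p + int n * P" unfolding p_def using mod_mult_div_eq[of "int x - int i" "int n", symmetric] by blast
    obtain Q where Q: "int y - int i = q + int n * Q" unfolding q_def using mod_mult_div_eq[of "int y - int i" "int n", symmetric] by blast
    have e1: "(int i - int y) mod int n = int n - q"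
      by (rule int_mod_repr[where K = "- Q - 1"]) (use pq p0 qn Q in \<open>auto simp: algebra_simps\<close>)
    have e2: "(int x - int y) mod int n = int n - q + p"
      by (rule int_mod_repr[where K = "P - Q - 1"]) (use pq p0 qn P Q in \<open>auto simp: algebra_simps\<close>)
    have "inG n S x i"
      using e1 e2 pq p0 qn assms(4) yx by simp
    from inv_iter[OF ctx xr this, of "t - 1"]
    have "inG n S x x" unfolding x_def by simp
    thus False by simp
  qed
qed

end
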